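(* Let $G$ be an abelian, second countable, locally compact group with Haar measure $\mu$ and $(\Lambda_n)$ a F\o lner sequence in $G$. Let $\mathfrak{H}$ be a Hilbert space and $f:G\to\mathfrak{H}$ bounded with $g\mapsto\langle f(g),x\rangle$ Borel measurable for every $x\in\mathfrak{H}$, and assume $(g,h)\mapsto\langle f(g),f(h)\rangle$ is Borel measurable on $G\times G$. Then $\int_\Lambda\langle f(g),f(gh)\rangle\,dg$ exists for all measurable $\Lambda\subset G$ with $\mu(\Lambda)<\infty$ and all $h\in G$. Assume that \[ \gamma_h:=\lim_{n\to\infty}\frac{1}{\mu(\Lambda_n)}\int_{\Lambda_n}\langle f(g),f(gh)\rangle\,dg \] exists for all $h\in G$. Then for all $n$, \[ \lim_{m\to\infty}\frac{1}{\mu(\Lambda_m)}\int_{\Lambda_n}\int_{\Lambda_n}\int_{\Lambda_m}\langle f(gh_1),f(gh_2)\rangle\,dg\,dh_1\,dh_2=\int_{\Lambda_n}\int_{\Lambda_n}\gamma_{h_1^{-1}h_2}\,dh_1\,dh_2, \] and in particular these integrals exist.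
   Context: A F\o lner sequence in $G$ is a sequence $(\Lambda_n)$ of compact subsets with $\mu(\Lambda_n)>0$ and $\lim_n\mu(\Lambda_n\,\Delta\,(\Lambda_n g))/\mu(\Lambda_n)=0$ for all $g\in G$. Inner products are conjugate linear in the first slot; iterated integrals are evaluated from the innermost outward. *)

theory Defs
  imports "HOL-Analysis.Analysis"
begin

text \<open>Complex inner product spaces (inner product conjugate linear in the FIRST slot).
  A complex Hilbert space is a type of class complex_inner that is also complete_space.\<close>

class complex_inner = real_normed_vector +
  fixes scaleC :: "complex \<Rightarrow> 'a \<Rightarrow> 'a"
  fixes cinner :: "'a \<Rightarrow> 'a \<Rightarrow> complex"
  assumes scaleC_add_right: "scaleC a (x + y) = scaleC a x + scaleC a y"
  and scaleC_add_left: "scaleC (a + b) x = scaleC a x + scaleC b x"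
  and scaleC_scaleC: "scaleC a (scaleC b x) = scaleC (a * b) x"
  and scaleC_one: "scaleC 1 x = x"
  and scaleR_scaleC: "scaleR r x = scaleC (complex_of_real r) x"
  and cinner_commute: "cinner x y = cnj (cinner y x)"
  and cinner_add_left: "cinner (x + y) z = cinner x z + cinner y z"
  and cinner_scaleC_left: "cinner (scaleC a x) y = cnj a * cinner x y"
  and cinner_self_real: "Im (cinner x x) = 0"
  and cinner_ge_zero: "0 \<le> Re (cinner x x)"
  and cinner_eq_zero_iff: "cinner x x = 0 \<longleftrightarrow> x = 0"
  and norm_eq_sqrt_cinner: "norm x = sqrt (Re (cinner x x))"

text \<open>Haar measure on a (Hausdorff) locally compact abelian group, group law written additively:
  a nonzero translation invariant Radon measure on the Borel sets.\<close>

definition haar_measure :: "'g::topological_ab_group_add measure \<Rightarrow> bool" where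
  "haar_measure \<mu> \<longleftrightarrow>
     sets \<mu> = sets borel \<and>
     (\<forall>g. \<forall>A\<in>sets borel. emeasure \<mu> ((\<lambda>x. g + x) ` A) = emeasure \<mu> A) \<and>
     (\<forall>K. compact K \<longrightarrow> emeasure \<mu> K < \<infinity>) \<and>
     (\<forall>U. open U \<and> U \<noteq> {} \<longrightarrow> emeasure \<mu> U > 0) \<and>
     (\<forall>A\<in>sets borel. emeasure \<mu> A = (INF U\<in>{U. open U \<and> A \<subseteq> U}. emeasure \<mu> U)) \<and>
     (\<forall>U. open U \<longrightarrow> emeasure \<mu> U = (SUP K\<in>{K. compact K \<and> K \<subseteq> U}. emeasure \<mu> K))"

definition folner_seq :: "'g::topological_ab_group_add measure \<Rightarrow> (nat \<Rightarrow> 'g set) \<Rightarrow> bool" where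
  "folner_seq \<mu> \<Lambda> \<longleftrightarrow>
     (\<forall>n. compact (\<Lambda> n) \<and> emeasure \<mu> (\<Lambda> n) > 0) \<and>
     (\<forall>g. (\<lambda>n. measure \<mu> ((\<Lambda> n - (\<lambda>x. x + g) ` \<Lambda> n) \<union> ((\<lambda>x. x + g) ` \<Lambda> n - \<Lambda> n))
              / measure \<mu> (\<Lambda> n)) \<longlonglongrightarrow> 0)"

end

theory Submission
  imports Defs
begin
lemma cinner_zero_left: "cinner (0::'a::complex_inner) y = 0"
  using cinner_add_left[of "0::'a" 0 y] by simp
lemma cinner_zero_right: "cinner (x::'a::complex_inner) 0 = 0"
  using cinner_commute[of x 0] by (simp add: cinner_zero_left)
lemma cinner_add_right: "cinner (x::'a::complex_inner) (y + z) = cinner x y + cinner x z"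
  by (metis cinner_add_left cinner_commute complex_cnj_add)
lemma cinner_scaleC_right: "cinner (x::'a::complex_inner) (scaleC a y) = a * cinner x y"
  by (metis cinner_commute cinner_scaleC_left complex_cnj_cnj complex_cnj_mult)

lemma cinner_self_eq: "cinner (x::'a::complex_inner) x = complex_of_real ((norm x)^2)"
  using cinner_self_real[of x] cinner_ge_zero[of x] norm_eq_sqrt_cinner[of x]
  by (simp add: complex_eq_iff)

lemma cauchy_schwarz_c: "norm (cinner (x::'a::complex_inner) y) \<le> norm x * norm y"
proof (cases "y = 0")
  case True then show ?thesis by (simp add: cinner_zero_right)
next
  case False
  define t where "t = cinner y x / cinner y y"
  define w where "w = x + scaleC (-t) y"
  have yy: "cinner y y = complex_of_real ((norm y)^2)" by (rule cinner_self_eq)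
  have ny: "norm y > 0" using False by simp
  have yyne: "cinner y y \<noteq> 0" using False cinner_eq_zero_iff by blast
  have "cinner y w = cinner y x + (-t) * cinner y y"
    by (simp add: w_def cinner_add_right cinner_scaleC_right)
  also have "\<dots> = 0" using yyne by (simp add: t_def)
  finally have yw: "cinner y w = 0" .
  have "cinner w w = cinner x w + cnj (-t) * cinner y w"
    by (subst (1) w_def) (simp add: cinner_add_left cinner_scaleC_left)
  also have "\<dots> = cinner x w" using yw by simp
  also have "\<dots> = cinner x x - t * cinner x y"
    by (simp add: w_def cinner_add_right cinner_scaleC_right)
  finally have ww: "cinner w w = cinner x x - t * cinner x y" .
  have "t * cinner x y = complex_of_real ((cmod (cinner x y))^2 / (norm y)^2)"
  proof -
    have "t * cinner x y = cnj (cinner x y) * cinner x y / cinner y y"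
      by (simp add: t_def cinner_commute[of y x])
    also have "cnj (cinner x y) * cinner x y = complex_of_real ((cmod (cinner x y))^2)"
      using complex_norm_square[of "cinner x y"] by (simp add: mult.commute)
    finally show ?thesis using yy by simp
  qed
  then have "Re (cinner w w) = (norm x)^2 - (cmod (cinner x y))^2 / (norm y)^2"
    using ww cinner_self_eq[of x] by simp
  with cinner_ge_zero[of w] have "(cmod (cinner x y))^2 / (norm y)^2 \<le> (norm x)^2" by simp
  then have "(cmod (cinner x y))^2 \<le> (norm x)^2 * (norm y)^2"
    using ny by (simp add: divide_le_eq)
  then have "(cmod (cinner x y))^2 \<le> (norm x * norm y)^2" by (simp add: power_mult_distrib)
  then show ?thesis by (rule power2_le_imp_le) simp
qed
lemma set_int_bound:
  fixes F :: "'a \<Rightarrow> complex"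
  assumes Fm: "F \<in> borel_measurable M" and A: "A \<in> sets M" "emeasure M A < \<infinity>"
    and b: "\<And>x. x \<in> A \<Longrightarrow> norm (F x) \<le> C" and C: "C \<ge> 0"
  shows "set_integrable M A F" "norm (LINT x:A|M. F x) \<le> C * measure M A"
proof -
  have iw: "integrable M (\<lambda>x. C * indicator A x)"
    using A by (intro integrable_mult_right integrable_real_indicator) auto
  have bd: "\<And>x. norm (indicator A x *\<^sub>R F x) \<le> C * indicator A x"
    using b C by (auto split: split_indicator)
  show si: "set_integrable M A F"
    unfolding set_integrable_def
  proof (rule Bochner_Integration.integrable_bound[OF iw])
    show "(\<lambda>x. indicator A x *\<^sub>R F x) \<in> borel_measurable M" using Fm A by measurable
    show "AE x in M. norm (indicator A x *\<^sub>R F x) \<le> norm (C * indicator A x)"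
      using bd C by (intro AE_I2) (auto simp: abs_mult)
  qed
  have "norm (LINT x:A|M. F x) \<le> (\<integral>x. norm (indicator A x *\<^sub>R F x) \<partial>M)"
    unfolding set_lebesgue_integral_def by (rule integral_norm_bound)
  also have "\<dots> \<le> (\<integral>x. C * indicator A x \<partial>M)"
    by (rule integral_mono) (use integrable_norm[OF si[unfolded set_integrable_def]] iw bd in auto)
  also have "\<dots> = C * measure M A" using A by simp
  finally show "norm (LINT x:A|M. F x) \<le> C * measure M A" .
qed

lemma diff_bound:
  fixes G :: "'a \<Rightarrow> complex"
  assumes Gm: "G \<in> borel_measurable M" and S: "S \<in> sets M" "emeasure M S < \<infinity>"
    and T: "T \<in> sets M" "emeasure M T < \<infinity>" and b: "\<And>x. norm (G x) \<le> C" and C: "C \<ge> 0"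
  shows "norm ((LINT x:S|M. G x) - (LINT x:T|M. G x)) \<le> C * measure M ((T - S) \<union> (S - T))"
proof -
  have iS: "set_integrable M S G" using set_int_bound(1)[OF Gm S b C] .
  have iT: "set_integrable M T G" using set_int_bound(1)[OF Gm T b C] .
  have D: "(T - S) \<union> (S - T) \<in> sets M" using S T by auto
  have De: "emeasure M ((T - S) \<union> (S - T)) < \<infinity>"
    by (rule le_less_trans[OF emeasure_mono[of _ "S \<union> T"]]) (use S T D in \<open>auto simp: emeasure_subadditive ennreal_add_less_top intro: le_less_trans[OF emeasure_subadditive]\<close>)
  have "(LINT x:S|M. G x) - (LINT x:T|M. G x) = (\<integral>x. (indicator S x - indicator T x) *\<^sub>R G x \<partial>M)"
    using iS iT unfolding set_lebesgue_integral_def set_integrable_def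
    by (simp add: integral_diff[symmetric] scaleR_left_diff_distrib)
  also have "\<dots> = (LINT x:((T - S) \<union> (S - T))|M. (indicator S x - indicator T x) * G x)"
    unfolding set_lebesgue_integral_def
    by (rule Bochner_Integration.integral_cong) (auto split: split_indicator)
  finally have eq: "(LINT x:S|M. G x) - (LINT x:T|M. G x) = (LINT x:((T - S) \<union> (S - T))|M. (indicator S x - indicator T x) * G x)" .
  show ?thesis unfolding eq
    by (rule set_int_bound(2)) (use Gm S T D De b C in \<open>auto simp: norm_mult split: split_indicator\<close>)
qed

lemma haar_sets: "haar_measure \<mu> \<Longrightarrow> sets \<mu> = sets borel"
  by (simp add: haar_measure_def)

lemma transl_meas: "(\<lambda>x. x + (h::'g::{topological_ab_group_add, second_countable_topology})) \<in> borel_measurable borel"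
  by measurable

lemma haar_img:
  fixes \<mu> :: "'g::{topological_ab_group_add, second_countable_topology} measure"
  assumes "haar_measure \<mu>" "A \<in> sets borel"
  shows "emeasure \<mu> ((\<lambda>x. x + h) ` A) = emeasure \<mu> A"
proof -
  have "(\<lambda>x. x + h) ` A = (\<lambda>x. h + x) ` A" by (simp add: add.commute)
  then show ?thesis using assms unfolding haar_measure_def by metis
qed

lemma haar_distr:
  fixes \<mu> :: "'g::{topological_ab_group_add, second_countable_topology} measure"
  assumes H: "haar_measure \<mu>"
  shows "distr \<mu> \<mu> (\<lambda>x. x + h) = \<mu>"
proof (rule measure_eqI)
  have s[measurable_cong]: "sets \<mu> = sets borel" using haar_sets[OF H] .
  have sp: "space \<mu> = UNIV" using sets_eq_imp_space_eq[OF s] by simp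
  have T: "(\<lambda>x. x + h) \<in> measurable \<mu> \<mu>" by measurable
  show "sets (distr \<mu> \<mu> (\<lambda>x. x + h)) = sets \<mu>" by simp
  fix A assume A: "A \<in> sets (distr \<mu> \<mu> (\<lambda>x. x + h))"
  then have A': "A \<in> sets borel" using s by simp
  have pre: "(\<lambda>x. x + h) -` A = (\<lambda>x. x + (-h)) ` A"
    by (auto simp: image_iff algebra_simps intro!: bexI[where x="_ + h"])
  show "emeasure (distr \<mu> \<mu> (\<lambda>x. x + h)) A = emeasure \<mu> A"
  proof -
    have "emeasure (distr \<mu> \<mu> (\<lambda>x. x + h)) A = emeasure \<mu> ((\<lambda>x. x + h) -` A)"
      using A by (simp add: emeasure_distr[OF T] sp)
    also have "\<dots> = emeasure \<mu> ((\<lambda>x. x + (-h)) ` A)" by (simp only: pre)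
    also have "\<dots> = emeasure \<mu> A" by (rule haar_img[OF H A'])
    finally show ?thesis .
  qed
qed

lemma Gcomp:
  assumes G: "(\<lambda>(a,b). G a b) \<in> borel_measurable (borel \<Otimes>\<^sub>M borel)"
    and a: "a \<in> measurable M borel" and b: "b \<in> measurable M borel"
  shows "(\<lambda>x. G (a x) (b x)) \<in> borel_measurable M"
  using measurable_compose[OF measurable_Pair[OF a b] G] by simp

lemma transl_int:
  fixes \<mu> :: "'g::{topological_ab_group_add, second_countable_topology} measure"
    and G :: "'g \<Rightarrow> 'g \<Rightarrow> complex"
  assumes H: "haar_measure \<mu>" and Gm: "(\<lambda>(a,b). G a b) \<in> borel_measurable (borel \<Otimes>\<^sub>M borel)"
    and L: "L \<in> sets borel"
  shows "(LINT g:L|\<mu>. G (g + h1) (g + h2)) = (LINT y:((\<lambda>x. x + h1) ` L)|\<mu>. G y (y + (-h1 + h2)))"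
proof -
  have s[measurable_cong]: "sets \<mu> = sets borel" using haar_sets[OF H] .
  define F where "F g = indicator L g *\<^sub>R G (g + h1) (g + h2)" for g
  have Fm: "F \<in> borel_measurable \<mu>"
  proof -
    have "(\<lambda>g. G (g + h1) (g + h2)) \<in> borel_measurable \<mu>"
      by (rule Gcomp[OF Gm]) measurable
    then show ?thesis unfolding F_def using L by measurable
  qed
  have T: "(\<lambda>x. x + (-h1)) \<in> measurable \<mu> \<mu>" by measurable
  have "(LINT g:L|\<mu>. G (g + h1) (g + h2)) = integral\<^sup>L \<mu> F"
    by (simp add: set_lebesgue_integral_def F_def[abs_def])
  also have "\<dots> = integral\<^sup>L (distr \<mu> \<mu> (\<lambda>x. x + (-h1))) F"
    by (simp only: haar_distr[OF H])
  also have "\<dots> = (\<integral>y. F (y + (-h1)) \<partial>\<mu>)"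
    by (rule integral_distr[OF T Fm])
  also have "\<dots> = (LINT y:((\<lambda>x. x + h1) ` L)|\<mu>. G y (y + (-h1 + h2)))"
    unfolding set_lebesgue_integral_def
  proof (rule Bochner_Integration.integral_cong[OF refl])
    fix y
    have "(y + - h1 \<in> L) = (y \<in> (\<lambda>x. x + h1) ` L)"
      by (auto simp: image_iff algebra_simps intro!: bexI[where x="y - h1"])
    then show "F (y + - h1) = indicator ((\<lambda>x. x + h1) ` L) y *\<^sub>R G y (y + (- h1 + h2))"
      by (simp add: F_def indicator_def algebra_simps)
  qed
  finally show ?thesis .
qed

lemma haar_sigma_finite:
  fixes \<mu> :: "'g::{topological_ab_group_add, t2_space, second_countable_topology} measure"
  assumes lc: "locally_compact_space (euclidean :: 'g topology)" and H: "haar_measure \<mu>"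
  shows "sigma_finite_measure \<mu>"
proof
  have s: "sets \<mu> = sets borel" using haar_sets[OF H] .
  have sp: "space \<mu> = UNIV" using sets_eq_imp_space_eq[OF s] by simp
  have cfin: "compact K \<Longrightarrow> emeasure \<mu> K < \<infinity>" for K using H by (simp add: haar_measure_def)
  obtain B :: "'g set set" where B: "countable B" "topological_basis B" using ex_countable_basis by blast
  define A where "A = {b\<in>B. \<exists>K. compact K \<and> b \<subseteq> K}"
  show "\<exists>A. countable A \<and> A \<subseteq> sets \<mu> \<and> \<Union> A = space \<mu> \<and> (\<forall>a\<in>A. emeasure \<mu> a \<noteq> \<infinity>)"
  proof (intro exI[of _ A] conjI)
    show "countable A" using B(1) unfolding A_def by (rule countable_subset[rotated]) auto
    show "A \<subseteq> sets \<mu>" using B(2) unfolding A_def s by (auto simp: topological_basis_open)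
    show "\<Union> A = space \<mu>"
    proof -
      have "x \<in> \<Union>A" for x
      proof -
        obtain U K where "open U" "compact K" "x \<in> U" "U \<subseteq> K"
          using lc unfolding locally_compact_space_def by (auto simp: compactin_euclidean_iff) blast
        then obtain V where "V \<in> B" "x \<in> V" "V \<subseteq> U" by (metis topological_basisE[OF B(2)])
        then show ?thesis unfolding A_def using \<open>compact K\<close> \<open>U \<subseteq> K\<close> by blast
      qed
      then show ?thesis unfolding sp by auto
    qed
    show "\<forall>a\<in>A. emeasure \<mu> a \<noteq> \<infinity>"
    proof
      fix a assume "a \<in> A"
      then obtain K where K: "compact K" "a \<subseteq> K" and "a \<in> B" unfolding A_def by auto
      then have "a \<in> sets \<mu>" "K \<in> sets \<mu>" using B(2) unfolding s
        by (auto simp: topological_basis_open compact_imp_closed)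
      then have "emeasure \<mu> a \<le> emeasure \<mu> K" using K by (intro emeasure_mono)
      also have "\<dots> < \<infinity>" using cfin K by auto
      finally show "emeasure \<mu> a \<noteq> \<infinity>" by simp
    qed
  qed
qed

theorem proposition2p5:
  fixes \<mu> :: "'g::{topological_ab_group_add, t2_space, second_countable_topology} measure"
    and \<Lambda> :: "nat \<Rightarrow> 'g set"
    and f :: "'g \<Rightarrow> 'h::{complex_inner, complete_space}"
    and \<gamma> :: "'g \<Rightarrow> complex"
  assumes lc: "locally_compact_space (euclidean :: 'g topology)"
    and haar: "haar_measure \<mu>"
    and folner: "folner_seq \<mu> \<Lambda>"
    and bounded: "\<exists>B. \<forall>g. norm (f g) \<le> B"
    and meas: "\<And>x. (\<lambda>g. cinner (f g) x) \<in> borel_measurable borel"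
    and meas2: "(\<lambda>(g, h). cinner (f g) (f h)) \<in> borel_measurable (borel :: ('g \<times> 'g) measure)"
  shows "(\<forall>A h. A \<in> sets \<mu> \<and> emeasure \<mu> A < \<infinity> \<longrightarrow>
            set_integrable \<mu> A (\<lambda>g. cinner (f g) (f (g + h))))
       \<and> ((\<forall>h. (\<lambda>n. (LINT g:\<Lambda> n|\<mu>. cinner (f g) (f (g + h))) / complex_of_real (measure \<mu> (\<Lambda> n)))
                 \<longlonglongrightarrow> \<gamma> h)
          \<longrightarrow> (\<forall>n.
               (\<forall>m h1 h2. set_integrable \<mu> (\<Lambda> m) (\<lambda>g. cinner (f (g + h1)) (f (g + h2)))) \<and>
               (\<forall>m h2. set_integrable \<mu> (\<Lambda> n)
                   (\<lambda>h1. LINT g:\<Lambda> m|\<mu>. cinner (f (g + h1)) (f (g + h2)))) \<and>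
               (\<forall>m. set_integrable \<mu> (\<Lambda> n)
                   (\<lambda>h2. LINT h1:\<Lambda> n|\<mu>. LINT g:\<Lambda> m|\<mu>. cinner (f (g + h1)) (f (g + h2)))) \<and>
               (\<forall>h2. set_integrable \<mu> (\<Lambda> n) (\<lambda>h1. \<gamma> (- h1 + h2))) \<and>
               set_integrable \<mu> (\<Lambda> n) (\<lambda>h2. LINT h1:\<Lambda> n|\<mu>. \<gamma> (- h1 + h2)) \<and>
               (\<lambda>m. (LINT h2:\<Lambda> n|\<mu>. LINT h1:\<Lambda> n|\<mu>. LINT g:\<Lambda> m|\<mu>.
                        cinner (f (g + h1)) (f (g + h2))) / complex_of_real (measure \<mu> (\<Lambda> m)))
                 \<longlonglongrightarrow> (LINT h2:\<Lambda> n|\<mu>. LINT h1:\<Lambda> n|\<mu>. \<gamma> (- h1 + h2))))"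
proof -
  obtain B0 where B0: "\<And>g. norm (f g) \<le> B0" using bounded by blast
  define C where "C = B0 * B0"
  have B0nn: "0 \<le> B0" using B0[of undefined] norm_ge_zero order_trans by blast
  have C0: "0 \<le> C" by (simp add: C_def B0nn)
  have Hb: "norm (cinner (f a) (f b)) \<le> C" for a b
  proof -
    have "norm (cinner (f a) (f b)) \<le> norm (f a) * norm (f b)" by (rule cauchy_schwarz_c)
    also have "\<dots> \<le> B0 * B0" by (intro mult_mono B0) (auto simp: B0nn)
    finally show ?thesis by (simp add: C_def)
  qed
  have s[measurable_cong]: "sets \<mu> = sets borel" using haar_sets[OF haar] .
  have sp: "space \<mu> = UNIV" using sets_eq_imp_space_eq[OF s] by simp
  have Gm: "(\<lambda>(a,b). cinner (f a) (f b)) \<in> borel_measurable (borel \<Otimes>\<^sub>M borel)"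
    using meas2 by (simp add: borel_prod)
  have Hm[measurable (raw)]: "\<And>M a b. a \<in> measurable M borel \<Longrightarrow> b \<in> measurable M borel \<Longrightarrow>
      (\<lambda>x. cinner (f (a x)) (f (b x))) \<in> borel_measurable M"
    by (rule Gcomp[OF Gm])
  have neg: "(\<lambda>x::'g. -x) \<in> borel_measurable borel"
    by (rule borel_measurable_continuous_onI) (intro continuous_intros)
  have negr[measurable (raw)]: "\<And>M a. a \<in> measurable M borel \<Longrightarrow> (\<lambda>x. - a x :: 'g) \<in> borel_measurable M"
    using measurable_compose[OF _ neg] by blast
  interpret sf: sigma_finite_measure \<mu> by (rule haar_sigma_finite[OF lc haar])
  have cfin: "compact K \<Longrightarrow> emeasure \<mu> K < \<infinity>" for K using haar by (simp add: haar_measure_def)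
  have Lc: "compact (\<Lambda> m)" and Lpos': "emeasure \<mu> (\<Lambda> m) > 0" for m
    using folner by (auto simp: folner_seq_def)
  have Ls[measurable]: "\<Lambda> m \<in> sets borel" for m using Lc by (simp add: compact_imp_closed)
  have Ls': "\<Lambda> m \<in> sets \<mu>" for m using Ls s by simp
  have Lfin: "emeasure \<mu> (\<Lambda> m) < \<infinity>" for m using cfin Lc by blast
  have Lpos: "measure \<mu> (\<Lambda> m) > 0" for m
    using Lpos'[of m] Lfin[of m] emeasure_eq_ennreal_measure[of \<mu> "\<Lambda> m"] by (auto simp: top.not_eq_extremum)
  have part1: "\<forall>A h. A \<in> sets \<mu> \<and> emeasure \<mu> A < \<infinity> \<longrightarrow>
            set_integrable \<mu> A (\<lambda>g. cinner (f g) (f (g + h)))"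
  proof (intro allI impI)
    fix A h assume A: "A \<in> sets \<mu> \<and> emeasure \<mu> A < \<infinity>"
    have "(\<lambda>g. cinner (f g) (f (g + h))) \<in> borel_measurable \<mu>" by measurable
    then show "set_integrable \<mu> A (\<lambda>g. cinner (f g) (f (g + h)))"
      using A by (intro set_int_bound(1)[where C=C] Hb C0) auto
  qed
  define I2 where "I2 m h1 h2 = (LINT g:\<Lambda> m|\<mu>. cinner (f (g + h1)) (f (g + h2)))" for m h1 h2
  define cm where "cm m = complex_of_real (measure \<mu> (\<Lambda> m))" for m
  define Avg where "Avg m h1 h2 = I2 m h1 h2 / cm m" for m h1 h2
  have cm0: "cm m \<noteq> 0" for m using Lpos[of m] by (simp add: cm_def)
  have ncm: "norm (cm m) = measure \<mu> (\<Lambda> m)" for m using Lpos[of m] by (simp add: cm_def)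
  have M1: "(\<lambda>(x, g). indicator (\<Lambda> m) g *\<^sub>R cinner (f (g + snd x)) (f (g + fst x)))
      \<in> borel_measurable ((\<mu> \<Otimes>\<^sub>M \<mu>) \<Otimes>\<^sub>M \<mu>)" for m
    by measurable
  have I2m: "(\<lambda>x. I2 m (snd x) (fst x)) \<in> borel_measurable (\<mu> \<Otimes>\<^sub>M \<mu>)" for m
    unfolding I2_def set_lebesgue_integral_def
    by (rule sf.borel_measurable_lebesgue_integral) (use M1[of m] in simp)
  have I2m1: "(\<lambda>h1. I2 m h1 h2) \<in> borel_measurable \<mu>" for m h2
    using measurable_compose[OF measurable_Pair[OF measurable_const[of h2 \<mu> \<mu>] measurable_ident_sets[OF refl]] I2m[of m]]
    by (simp add: sp)
  have Avgm: "(\<lambda>x. Avg m (snd x) (fst x)) \<in> borel_measurable (\<mu> \<Otimes>\<^sub>M \<mu>)" for m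
    unfolding Avg_def using I2m[of m] by measurable
  have Avgm1: "(\<lambda>h1. Avg m h1 h2) \<in> borel_measurable \<mu>" for m h2
    unfolding Avg_def using I2m1[of m h2] by measurable
  have I2int: "set_integrable \<mu> (\<Lambda> m) (\<lambda>g. cinner (f (g + h1)) (f (g + h2)))" for m h1 h2
    by (rule set_int_bound(1)[where C=C]) (use Ls' Lfin Hb C0 in auto)
  have I2b: "norm (I2 m h1 h2) \<le> C * measure \<mu> (\<Lambda> m)" for m h1 h2
    unfolding I2_def by (rule set_int_bound(2)[where C=C]) (use Ls' Lfin Hb C0 in auto)
  have Avgb: "norm (Avg m h1 h2) \<le> C" for m h1 h2
    using I2b[of m h1 h2] Lpos[of m] by (simp add: Avg_def norm_divide ncm divide_le_eq)
  show ?thesis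
  proof (intro conjI[OF part1] impI allI)
    fix n
    assume lim: "\<forall>h. (\<lambda>n. (LINT g:\<Lambda> n|\<mu>. cinner (f g) (f (g + h))) / complex_of_real (measure \<mu> (\<Lambda> n)))
                 \<longlonglongrightarrow> \<gamma> h"
    define J where "J m h = (LINT g:\<Lambda> m|\<mu>. cinner (f g) (f (g + h))) / cm m" for m h
    have Jlim: "(\<lambda>m. J m h) \<longlonglongrightarrow> \<gamma> h" for h using lim by (simp add: J_def cm_def)
    have Jm: "J m \<in> borel_measurable \<mu>" for m
    proof -
      have "(\<lambda>(h, g). indicator (\<Lambda> m) g *\<^sub>R cinner (f g) (f (g + h))) \<in> borel_measurable (\<mu> \<Otimes>\<^sub>M \<mu>)"
        by measurable
      then have "(\<lambda>h. LINT g:\<Lambda> m|\<mu>. cinner (f g) (f (g + h))) \<in> borel_measurable \<mu>"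
        unfolding set_lebesgue_integral_def by (rule sf.borel_measurable_lebesgue_integral[OF ])
      then show ?thesis unfolding J_def[abs_def] by measurable
    qed
    have gm: "\<gamma> \<in> borel_measurable \<mu>"
      by (rule borel_measurable_LIMSEQ_metric[OF Jm Jlim])
    have gm': "\<gamma> \<in> borel_measurable borel" using gm by (simp add: measurable_cong_sets[OF s refl])
    have gmr[measurable (raw)]: "\<And>M a. a \<in> measurable M borel \<Longrightarrow> (\<lambda>x. \<gamma> (a x)) \<in> borel_measurable M"
      using measurable_compose[OF _ gm'] by blast
    have Jb: "norm (J m h) \<le> C" for m h
    proof -
      have "norm (LINT g:\<Lambda> m|\<mu>. cinner (f g) (f (g + h))) \<le> C * measure \<mu> (\<Lambda> m)"
        by (rule set_int_bound(2)[where C=C]) (use Ls' Lfin Hb C0 in auto)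
      then show ?thesis using Lpos[of m] by (simp add: J_def norm_divide ncm divide_le_eq)
    qed
    have gb: "norm (\<gamma> h) \<le> C" for h
      by (rule LIMSEQ_le_const2[OF tendsto_norm[OF Jlim[of h]]]) (use Jb in auto)
    have pw: "(\<lambda>m. Avg m h1 h2) \<longlonglongrightarrow> \<gamma> (- h1 + h2)" for h1 h2
    proof -
      define k where "k = - h1 + h2"
      define S where "S m = (\<lambda>x. x + h1) ` \<Lambda> m" for m
      have Sc: "compact (S m)" for m unfolding S_def
        by (rule compact_continuous_image[OF _ Lc]) (intro continuous_intros)
      have Ss: "S m \<in> sets \<mu>" for m using Sc[of m] s by (simp add: compact_imp_closed)
      have Sfin: "emeasure \<mu> (S m) < \<infinity>" for m using cfin Sc by blast
      have tr: "I2 m h1 h2 = (LINT y:S m|\<mu>. cinner (f y) (f (y + k)))" for m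
        unfolding I2_def S_def k_def
        by (rule transl_int[OF haar _ Ls, where G="\<lambda>a b. cinner (f a) (f b)", OF Gm])
      define E where "E m = I2 m h1 h2 - (LINT y:\<Lambda> m|\<mu>. cinner (f y) (f (y + k)))" for m
      have Eb: "norm (E m) \<le> C * measure \<mu> ((\<Lambda> m - (\<lambda>x. x + h1) ` \<Lambda> m) \<union> ((\<lambda>x. x + h1) ` \<Lambda> m - \<Lambda> m))" for m
        unfolding E_def tr S_def[symmetric]
        by (rule diff_bound) (use Ss Sfin Ls' Lfin Hb C0 in auto)
      have fo: "(\<lambda>m. measure \<mu> ((\<Lambda> m - (\<lambda>x. x + h1) ` \<Lambda> m) \<union> ((\<lambda>x. x + h1) ` \<Lambda> m - \<Lambda> m))
              / measure \<mu> (\<Lambda> m)) \<longlonglongrightarrow> 0"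
        using folner by (simp add: folner_seq_def)
      have E0: "(\<lambda>m. E m / cm m) \<longlonglongrightarrow> 0"
      proof (rule Lim_null_comparison)
        show "\<forall>\<^sub>F m in sequentially. norm (E m / cm m) \<le> C * (measure \<mu> ((\<Lambda> m - (\<lambda>x. x + h1) ` \<Lambda> m) \<union> ((\<lambda>x. x + h1) ` \<Lambda> m - \<Lambda> m))
              / measure \<mu> (\<Lambda> m))"
          using Eb Lpos by (intro always_eventually allI) (simp add: norm_divide ncm divide_right_mono)
        show "(\<lambda>m. C * (measure \<mu> ((\<Lambda> m - (\<lambda>x. x + h1) ` \<Lambda> m) \<union> ((\<lambda>x. x + h1) ` \<Lambda> m - \<Lambda> m))
              / measure \<mu> (\<Lambda> m))) \<longlonglongrightarrow> 0"
          using tendsto_mult_right_zero[OF fo] by simp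
      qed
      have "(\<lambda>m. E m / cm m + J m k) \<longlonglongrightarrow> 0 + \<gamma> k"
        by (intro tendsto_add E0 Jlim)
      moreover have "E m / cm m + J m k = Avg m h1 h2" for m
        using cm0[of m] by (simp add: E_def J_def Avg_def diff_divide_distrib)
      ultimately show ?thesis by (simp add: k_def)
    qed
    have g2m: "(\<lambda>x. \<gamma> (- snd x + fst x)) \<in> borel_measurable (\<mu> \<Otimes>\<^sub>M \<mu>)" by measurable
    have g1m: "(\<lambda>h1. \<gamma> (- h1 + h2)) \<in> borel_measurable \<mu>" for h2 by measurable
    have g1int: "set_integrable \<mu> (\<Lambda> n) (\<lambda>h1. \<gamma> (- h1 + h2))" for h2
      by (rule set_int_bound(1)[OF g1m Ls' Lfin gb C0])
    have G2m: "(\<lambda>h2. LINT h1:\<Lambda> n|\<mu>. \<gamma> (- h1 + h2)) \<in> borel_measurable \<mu>"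
      unfolding set_lebesgue_integral_def
      by (rule sf.borel_measurable_lebesgue_integral) (use g2m in \<open>simp add: split_beta'\<close>)
    have G2b: "norm (LINT h1:\<Lambda> n|\<mu>. \<gamma> (- h1 + h2)) \<le> C * measure \<mu> (\<Lambda> n)" for h2
      by (rule set_int_bound(2)[OF g1m Ls' Lfin gb C0])
    have g2int: "set_integrable \<mu> (\<Lambda> n) (\<lambda>h2. LINT h1:\<Lambda> n|\<mu>. \<gamma> (- h1 + h2))"
      by (rule set_int_bound(1)[OF G2m Ls' Lfin G2b]) (use C0 Lpos in auto)
    have I3m: "(\<lambda>h2. LINT h1:\<Lambda> n|\<mu>. I2 m h1 h2) \<in> borel_measurable \<mu>" for m
      unfolding set_lebesgue_integral_def
      by (rule sf.borel_measurable_lebesgue_integral) (use I2m[of m] in \<open>simp add: split_beta'\<close>)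
    have I2int1: "set_integrable \<mu> (\<Lambda> n) (\<lambda>h1. I2 m h1 h2)" for m h2
      by (rule set_int_bound(1)[OF I2m1 Ls' Lfin I2b]) (use C0 Lpos in auto)
    have I3b: "norm (LINT h1:\<Lambda> n|\<mu>. I2 m h1 h2) \<le> (C * measure \<mu> (\<Lambda> m)) * measure \<mu> (\<Lambda> n)" for m h2
      by (rule set_int_bound(2)[OF I2m1 Ls' Lfin I2b]) (use C0 Lpos in auto)
    have I3int: "set_integrable \<mu> (\<Lambda> n) (\<lambda>h2. LINT h1:\<Lambda> n|\<mu>. I2 m h1 h2)" for m
      by (rule set_int_bound(1)[OF I3m Ls' Lfin I3b]) (use C0 Lpos in auto)
    have lay1: "(\<lambda>m. LINT h1:\<Lambda> n|\<mu>. Avg m h1 h2) \<longlonglongrightarrow> (LINT h1:\<Lambda> n|\<mu>. \<gamma> (- h1 + h2))" for h2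
      unfolding set_lebesgue_integral_def
    proof (rule integral_dominated_convergence[where w="\<lambda>h1. indicator (\<Lambda> n) h1 * C"])
      show "(\<lambda>h1. indicator (\<Lambda> n) h1 *\<^sub>R \<gamma> (- h1 + h2)) \<in> borel_measurable \<mu>" by measurable
      show "(\<lambda>h1. indicator (\<Lambda> n) h1 *\<^sub>R Avg m h1 h2) \<in> borel_measurable \<mu>" for m
        using Avgm1[of m h2] by measurable
      show "integrable \<mu> (\<lambda>h1. indicator (\<Lambda> n) h1 * C)"
        using Ls' Lfin by (intro integrable_mult_left integrable_real_indicator) auto
      show "AE h1 in \<mu>. (\<lambda>m. indicator (\<Lambda> n) h1 *\<^sub>R Avg m h1 h2) \<longlonglongrightarrow> indicator (\<Lambda> n) h1 *\<^sub>R \<gamma> (- h1 + h2)"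
        by (intro AE_I2 tendsto_scaleR tendsto_const pw)
      show "AE h1 in \<mu>. norm (indicator (\<Lambda> n) h1 *\<^sub>R Avg m h1 h2) \<le> indicator (\<Lambda> n) h1 * C" for m
        using Avgb by (intro AE_I2) (auto split: split_indicator)
    qed
    have A3m: "(\<lambda>h2. LINT h1:\<Lambda> n|\<mu>. Avg m h1 h2) \<in> borel_measurable \<mu>" for m
      unfolding set_lebesgue_integral_def
      by (rule sf.borel_measurable_lebesgue_integral) (use Avgm[of m] in \<open>simp add: split_beta'\<close>)
    have A3b: "norm (LINT h1:\<Lambda> n|\<mu>. Avg m h1 h2) \<le> C * measure \<mu> (\<Lambda> n)" for m h2
      by (rule set_int_bound(2)[OF Avgm1 Ls' Lfin Avgb C0])
    have lay2': "(\<lambda>m. \<integral>h2. indicator (\<Lambda> n) h2 *\<^sub>R (LINT h1:\<Lambda> n|\<mu>. Avg m h1 h2) \<partial>\<mu>) \<longlonglongrightarrow> (\<integral>h2. indicator (\<Lambda> n) h2 *\<^sub>R (LINT h1:\<Lambda> n|\<mu>. \<gamma> (- h1 + h2)) \<partial>\<mu>)"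
    proof (rule integral_dominated_convergence[where w="\<lambda>h2. indicator (\<Lambda> n) h2 * (C * measure \<mu> (\<Lambda> n))"])
      show "(\<lambda>h2. indicator (\<Lambda> n) h2 *\<^sub>R (LINT h1:\<Lambda> n|\<mu>. \<gamma> (- h1 + h2))) \<in> borel_measurable \<mu>"
        using G2m by measurable
      show "(\<lambda>h2. indicator (\<Lambda> n) h2 *\<^sub>R (LINT h1:\<Lambda> n|\<mu>. Avg m h1 h2)) \<in> borel_measurable \<mu>" for m
        using A3m[of m] by measurable
      show "integrable \<mu> (\<lambda>h2. indicator (\<Lambda> n) h2 * (C * measure \<mu> (\<Lambda> n)))"
        using Ls' Lfin by (intro integrable_mult_left integrable_real_indicator) auto
      show "AE h2 in \<mu>. (\<lambda>m. indicator (\<Lambda> n) h2 *\<^sub>R (LINT h1:\<Lambda> n|\<mu>. Avg m h1 h2)) \<longlonglongrightarrow> indicator (\<Lambda> n) h2 *\<^sub>R (LINT h1:\<Lambda> n|\<mu>. \<gamma> (- h1 + h2))"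
        by (intro AE_I2 tendsto_scaleR tendsto_const lay1)
      show "AE h2 in \<mu>. norm (indicator (\<Lambda> n) h2 *\<^sub>R (LINT h1:\<Lambda> n|\<mu>. Avg m h1 h2)) \<le> indicator (\<Lambda> n) h2 * (C * measure \<mu> (\<Lambda> n))" for m
        using A3b by (intro AE_I2) (auto split: split_indicator)
    qed
    have lay2: "(\<lambda>m. LINT h2:\<Lambda> n|\<mu>. LINT h1:\<Lambda> n|\<mu>. Avg m h1 h2) \<longlonglongrightarrow> (LINT h2:\<Lambda> n|\<mu>. LINT h1:\<Lambda> n|\<mu>. \<gamma> (- h1 + h2))"
      using lay2' unfolding set_lebesgue_integral_def .
    have eqA: "(LINT h2:\<Lambda> n|\<mu>. LINT h1:\<Lambda> n|\<mu>. Avg m h1 h2) = (LINT h2:\<Lambda> n|\<mu>. LINT h1:\<Lambda> n|\<mu>. I2 m h1 h2) / cm m" for m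
      by (simp add: Avg_def)
    have lim3: "(\<lambda>m. (LINT h2:\<Lambda> n|\<mu>. LINT h1:\<Lambda> n|\<mu>. I2 m h1 h2) / cm m) \<longlonglongrightarrow> (LINT h2:\<Lambda> n|\<mu>. LINT h1:\<Lambda> n|\<mu>. \<gamma> (- h1 + h2))"
      using lay2 unfolding eqA .
    show "(\<forall>m h1 h2. set_integrable \<mu> (\<Lambda> m) (\<lambda>g. cinner (f (g + h1)) (f (g + h2)))) \<and>
               (\<forall>m h2. set_integrable \<mu> (\<Lambda> n)
                   (\<lambda>h1. LINT g:\<Lambda> m|\<mu>. cinner (f (g + h1)) (f (g + h2)))) \<and>
               (\<forall>m. set_integrable \<mu> (\<Lambda> n)
                   (\<lambda>h2. LINT h1:\<Lambda> n|\<mu>. LINT g:\<Lambda> m|\<mu>. cinner (f (g + h1)) (f (g + h2)))) \<and>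
               (\<forall>h2. set_integrable \<mu> (\<Lambda> n) (\<lambda>h1. \<gamma> (- h1 + h2))) \<and>
               set_integrable \<mu> (\<Lambda> n) (\<lambda>h2. LINT h1:\<Lambda> n|\<mu>. \<gamma> (- h1 + h2)) \<and>
               (\<lambda>m. (LINT h2:\<Lambda> n|\<mu>. LINT h1:\<Lambda> n|\<mu>. LINT g:\<Lambda> m|\<mu>.
                        cinner (f (g + h1)) (f (g + h2))) / complex_of_real (measure \<mu> (\<Lambda> m)))
                 \<longlonglongrightarrow> (LINT h2:\<Lambda> n|\<mu>. LINT h1:\<Lambda> n|\<mu>. \<gamma> (- h1 + h2))"
      using I2int I2int1 I3int g1int g2int lim3 unfolding I2_def cm_def by blast
  qed
qed

end
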